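(* Fix a positive integer $n$ and let $PC_n$ be the set of unordered pairs $\{\alpha,\beta\}$ of compositions with $|\alpha|+|\beta|=n$. The relation $\{\alpha,\beta\}\le\{\gamma,\delta\}$ if and only if $L_\gamma L_\delta-L_\alpha L_\beta$ is $L$-positive (a nonnegative integer combination of fundamental quasi-symmetric functions) is a partial order on $PC_n$.
   Context: A composition of $n\ge0$ is a sequence of positive integers summing to $n$ (for $n=0$ this is the empty composition, for which $L$ is taken to be $1$). For a composition $\alpha=(\alpha_1,\dots,\alpha_k)$ of $n\ge1$, $D(\alpha)=\{\alpha_1,\dots,\alpha_1+\dots+\alpha_{k-1}\}$, $M_\alpha=\sum_{i_1<\dots<i_k}x_{i_1}^{\alpha_1}\cdots x_{i_k}^{\alpha_k}$, and $L_\alpha=\sum_{|\beta|=n,D(\beta)\subseteq D(\alpha)}M_\beta$. *)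

theory Defs
  imports Main "HOL-Library.Multiset"
begin

(* Formal power series in the variables x_0, x_1, ... with integer coefficients,
   represented by their coefficient function on exponent vectors (monomials)
   e :: nat => nat. *)
type_synonym fps_int = "(nat \<Rightarrow> nat) \<Rightarrow> int"

definition is_monomial :: "(nat \<Rightarrow> nat) \<Rightarrow> bool" where
  "is_monomial e \<longleftrightarrow> finite {i. e i \<noteq> 0}"

definition fmul :: "fps_int \<Rightarrow> fps_int \<Rightarrow> fps_int" where
  "fmul f g = (\<lambda>e. if is_monomial e then
      (\<Sum>(a,b)\<in>{(a,b). \<forall>i. a i + b i = e i}. f a * g b) else 0)"

definition is_comp :: "nat list \<Rightarrow> bool" where
  "is_comp \<alpha> \<longleftrightarrow> (\<forall>x\<in>set \<alpha>. 0 < x)"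

definition comps :: "nat \<Rightarrow> nat list set" where
  "comps n = {\<alpha>. is_comp \<alpha> \<and> sum_list \<alpha> = n}"

definition Dset :: "nat list \<Rightarrow> nat set" where
  "Dset \<alpha> = {sum_list (take i \<alpha>) | i. 1 \<le> i \<and> i < length \<alpha>}"

definition Mqs :: "nat list \<Rightarrow> fps_int" where
  "Mqs \<alpha> = (\<lambda>e. if is_monomial e \<and> map e (sorted_list_of_set {i. e i \<noteq> 0}) = \<alpha>
                 then 1 else 0)"

definition Lqs :: "nat list \<Rightarrow> fps_int" where
  "Lqs \<alpha> = (\<lambda>e. \<Sum>\<beta>\<in>{\<beta>\<in>comps (sum_list \<alpha>). Dset \<beta> \<subseteq> Dset \<alpha>}. Mqs \<beta> e)"

definition L_positive :: "fps_int \<Rightarrow> bool" where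
  "L_positive f \<longleftrightarrow> (\<exists>S c. finite S \<and> (\<forall>\<gamma>\<in>S. is_comp \<gamma>) \<and>
       f = (\<lambda>e. \<Sum>\<gamma>\<in>S. int (c \<gamma>) * Lqs \<gamma> e))"

definition PC :: "nat \<Rightarrow> nat list multiset set" where
  "PC n = {{#\<alpha>, \<beta>#} | \<alpha> \<beta>. is_comp \<alpha> \<and> is_comp \<beta> \<and> sum_list \<alpha> + sum_list \<beta> = n}"

(* {alpha,beta} <= {gamma,delta} iff L_gamma L_delta - L_alpha L_beta is L-positive
   (the product is commutative, so the choice of representatives is irrelevant) *)
definition pc_le :: "nat list multiset \<Rightarrow> nat list multiset \<Rightarrow> bool" where
  "pc_le P Q \<longleftrightarrow> (\<exists>\<alpha> \<beta> \<gamma> \<delta>. P = {#\<alpha>, \<beta>#} \<and> Q = {#\<gamma>, \<delta>#} \<and>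
      L_positive (\<lambda>e. fmul (Lqs \<gamma>) (Lqs \<delta>) e - fmul (Lqs \<alpha>) (Lqs \<beta>) e))"

definition pc_rel :: "nat \<Rightarrow> (nat list multiset \<times> nat list multiset) set" where
  "pc_rel n = {(P, Q). P \<in> PC n \<and> Q \<in> PC n \<and> pc_le P Q}"

end

theory Submission
  imports Defs
begin

definition flat :: "(nat \<Rightarrow> nat) \<Rightarrow> nat list" where
  "flat e = map e (sorted_list_of_set {i. e i \<noteq> 0})"

definition Sset :: "nat list \<Rightarrow> nat set" where
  "Sset a = {sum_list (take i a) | i. i \<le> length a}"

lemma finite_comps: "finite (comps m)"
proof -
  have "comps m \<subseteq> {xs. set xs \<subseteq> {0..m} \<and> length xs \<le> m}"
  proof
    fix xs assume "xs \<in> comps m"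
    then have c: "\<forall>x\<in>set xs. 0 < x" "sum_list xs = m" by (auto simp: comps_def is_comp_def)
    have "length xs \<le> sum_list xs" using c(1)
      by (induction xs) (auto simp: Suc_le_eq)
    moreover have "set xs \<subseteq> {0..m}" using c(2) member_le_sum_list by fastforce
    ultimately show "xs \<in> {xs. set xs \<subseteq> {0..m} \<and> length xs \<le> m}" using c by auto
  qed
  moreover have "finite {xs. set xs \<subseteq> {0..m} \<and> length xs \<le> m}"
    by (rule finite_lists_length_le) auto
  ultimately show ?thesis by (rule finite_subset)
qed

lemma Mqs_alt: "Mqs b e = (if is_monomial e \<and> flat e = b then 1 else 0)"
  by (simp add: Mqs_def flat_def)

lemma Lqs_alt: "Lqs a e = (if is_monomial e \<and> flat e \<in> comps (sum_list a) \<and> Dset (flat e) \<subseteq> Dset a then 1 else 0)"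
proof -
  have "Lqs a e = (\<Sum>b\<in>{b\<in>comps (sum_list a). Dset b \<subseteq> Dset a}. if b = flat e then (if is_monomial e then 1 else 0) else 0)"
    unfolding Lqs_def Mqs_alt by (intro sum.cong) auto
  also have "\<dots> = (if flat e \<in> {b\<in>comps (sum_list a). Dset b \<subseteq> Dset a} then (if is_monomial e then 1 else 0) else 0)"
    by (rule sum.delta) (simp add: finite_comps)
  finally show ?thesis by auto
qed

definition prep :: "nat \<Rightarrow> (nat \<Rightarrow> nat) \<Rightarrow> (nat \<Rightarrow> nat)" where
  "prep x e = (\<lambda>i. case i of 0 \<Rightarrow> x | Suc j \<Rightarrow> e j)"

lemma prep_0[simp]: "prep x e 0 = x" and prep_Suc[simp]: "prep x e (Suc j) = e j"
  by (auto simp: prep_def)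

lemma Sset_Nil[simp]: "Sset [] = {0}"
  by (auto simp: Sset_def)

lemma Sset_Cons: "Sset (x # w) = insert 0 ((+) x ` Sset w)"
proof (rule set_eqI, rule iffI)
  fix y assume "y \<in> Sset (x # w)"
  then obtain i where i: "i \<le> Suc (length w)" "y = sum_list (take i (x # w))" by (auto simp: Sset_def)
  show "y \<in> insert 0 ((+) x ` Sset w)"
  proof (cases i)
    case 0 then show ?thesis using i by simp
  next
    case (Suc j) then show ?thesis using i by (auto simp: Sset_def)
  qed
next
  fix y assume "y \<in> insert 0 ((+) x ` Sset w)"
  then consider "y = 0" | j where "j \<le> length w" "y = x + sum_list (take j w)" by (auto simp: Sset_def)
  then show "y \<in> Sset (x # w)"
  proof cases
    case 1 then show ?thesis unfolding Sset_def by (rule_tac CollectI, rule_tac x=0 in exI) simp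
  next
    case 2 then show ?thesis unfolding Sset_def by (rule_tac CollectI, rule_tac x="Suc j" in exI) simp
  qed
qed

lemma zero_in_Sset[simp]: "0 \<in> Sset w"
  by (cases w) (auto simp: Sset_Cons)

lemma sum_in_Sset[simp]: "sum_list w \<in> Sset w"
  unfolding Sset_def by (rule CollectI, rule exI[of _ "length w"]) simp

lemma Sset_le: "y \<in> Sset w \<Longrightarrow> y \<le> sum_list w"
proof (induction w arbitrary: y)
  case Nil then show ?case by simp
next
  case (Cons a w) then show ?case by (auto simp: Sset_Cons)
qed

lemma Sset_eq: "Sset w = insert 0 (insert (sum_list w) (Dset w))"
proof (rule set_eqI, rule iffI)
  fix y assume "y \<in> Sset w"
  then obtain i where i: "i \<le> length w" "y = sum_list (take i w)" by (auto simp: Sset_def)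
  show "y \<in> insert 0 (insert (sum_list w) (Dset w))"
  proof (cases "i = 0 \<or> i = length w")
    case True then show ?thesis using i by auto
  next
    case False then have "y \<in> Dset w" using i unfolding Dset_def by auto
    then show ?thesis by simp
  qed
next
  fix y assume "y \<in> insert 0 (insert (sum_list w) (Dset w))"
  moreover have "Dset w \<subseteq> Sset w" unfolding Dset_def Sset_def by auto
  ultimately show "y \<in> Sset w" using zero_in_Sset sum_in_Sset by blast
qed

lemma sum_list_pos_comp: "is_comp w \<Longrightarrow> w \<noteq> [] \<Longrightarrow> 0 < sum_list w"
  by (cases w) (auto simp: is_comp_def)

lemma Dset_bounds:
  assumes "is_comp w" "d \<in> Dset w" shows "0 < d \<and> d < sum_list w"
proof -
  obtain i where i: "1 \<le> i" "i < length w" "d = sum_list (take i w)" using assms(2) by (auto simp: Dset_def)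
  have ct: "is_comp (take i w)" "is_comp (drop i w)" using assms(1) by (auto simp: is_comp_def dest: in_set_takeD in_set_dropD)
  have "take i w \<noteq> []" "drop i w \<noteq> []" using i by auto
  then have "0 < sum_list (take i w)" "0 < sum_list (drop i w)" using ct sum_list_pos_comp by auto
  moreover have "sum_list w = sum_list (take i w) + sum_list (drop i w)"
    by (metis append_take_drop_id sum_list_append)
  ultimately show ?thesis using i by auto
qed

lemma Dset_Sset_iff:
  assumes "is_comp w" "is_comp a" "sum_list w = sum_list a"
  shows "Dset w \<subseteq> Dset a \<longleftrightarrow> Sset w \<subseteq> Sset a"
proof
  assume "Dset w \<subseteq> Dset a" then show "Sset w \<subseteq> Sset a" using assms(3) by (auto simp: Sset_eq)
next
  assume S: "Sset w \<subseteq> Sset a"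
  show "Dset w \<subseteq> Dset a"
  proof
    fix d assume d: "d \<in> Dset w"
    then have "d \<in> Sset a" using S by (auto simp: Sset_eq)
    moreover have "0 < d \<and> d < sum_list a" using Dset_bounds[OF assms(1) d] assms(3) by auto
    ultimately show "d \<in> Dset a" by (auto simp: Sset_eq)
  qed
qed

lemma flat_comp: "is_monomial e \<Longrightarrow> is_comp (flat e)"
  by (auto simp: flat_def is_comp_def is_monomial_def)

lemma Lqs_alt2:
  assumes "is_comp a"
  shows "Lqs a e = (if is_monomial e \<and> sum_list (flat e) = sum_list a \<and> Sset (flat e) \<subseteq> Sset a then 1 else 0)"
proof (cases "is_monomial e")
  case True
  then have "is_comp (flat e)" by (rule flat_comp)
  then show ?thesis using True assms unfolding Lqs_alt comps_def by (auto simp: Dset_Sset_iff)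
qed (simp add: Lqs_alt)

lemma Lqs_nonneg: "0 \<le> Lqs a e"
  by (simp add: Lqs_alt)

lemma monomial_prep[simp]: "is_monomial (prep x e) \<longleftrightarrow> is_monomial e"
proof -
  have "{i. prep x e i \<noteq> 0} \<subseteq> insert 0 (Suc ` {i. e i \<noteq> 0})"
  proof
    fix i assume "i \<in> {i. prep x e i \<noteq> 0}"
    then show "i \<in> insert 0 (Suc ` {i. e i \<noteq> 0})" by (cases i) auto
  qed
  moreover have "{i. e i \<noteq> 0} = (\<lambda>i. i - 1) ` ({i. prep x e i \<noteq> 0} - {0})"
  proof (rule set_eqI, rule iffI)
    fix i assume "i \<in> {i. e i \<noteq> 0}"
    then show "i \<in> (\<lambda>i. i - 1) ` ({i. prep x e i \<noteq> 0} - {0})"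
      by (intro image_eqI[where x="Suc i"]) auto
  next
    fix i assume "i \<in> (\<lambda>i. i - 1) ` ({i. prep x e i \<noteq> 0} - {0})"
    then obtain j where "j \<in> {i. prep x e i \<noteq> 0} - {0}" "i = j - 1" by (elim imageE) blast
    then show "i \<in> {i. e i \<noteq> 0}" by (cases j) auto
  qed
  ultimately show ?thesis unfolding is_monomial_def
    by (metis (no_types, lifting) finite_Diff finite_imageI finite_insert finite_subset)
qed

lemma sorted_Suc_image:
  assumes "finite Z"
  shows "sorted_list_of_set (Suc ` Z) = map Suc (sorted_list_of_set Z)"
  using assms by (subst sorted_list_of_set_unique[symmetric])
     (auto simp: sorted_wrt_map card_image distinct_card[symmetric] distinct_map)

lemma sorted_0_Suc_image:
  assumes "finite Z"
  shows "sorted_list_of_set (insert 0 (Suc ` Z)) = 0 # map Suc (sorted_list_of_set Z)"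
proof -
  have "distinct (0 # map Suc (sorted_list_of_set Z))" using assms by (auto simp: distinct_map)
  then have "length (0 # map Suc (sorted_list_of_set Z)) = card (insert 0 (Suc ` Z))"
    using assms by (metis distinct_card list.set(2) list.set_map set_sorted_list_of_set)
  then show ?thesis
    using assms by (subst sorted_list_of_set_unique[symmetric]) (auto simp: sorted_wrt_map)
qed

lemma flat_prep:
  assumes "is_monomial e"
  shows "flat (prep x e) = (if x = 0 then flat e else x # flat e)"
proof -
  have fin: "finite {i. e i \<noteq> 0}" using assms by (simp add: is_monomial_def)
  have s: "{i. prep x e i \<noteq> 0} = (if x = 0 then Suc ` {i. e i \<noteq> 0} else insert 0 (Suc ` {i. e i \<noteq> 0}))"
    by (rule set_eqI, case_tac xa) auto
  show ?thesis
  proof (cases "x = 0")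
    case True then show ?thesis unfolding flat_def s using fin by (simp add: sorted_Suc_image comp_def)
  next
    case False then show ?thesis unfolding flat_def s
      by (subst if_not_P, simp, subst sorted_0_Suc_image[OF fin]) (simp add: comp_def)
  qed
qed

fun cutp :: "nat \<Rightarrow> nat list \<Rightarrow> nat list" where
  "cutp 0 xs = xs"
| "cutp (Suc k) [] = []"
| "cutp (Suc k) (a # xs) = cutp (Suc k - a) xs"

lemma is_comp_Cons[simp]: "is_comp (a # xs) \<longleftrightarrow> 0 < a \<and> is_comp xs"
  by (auto simp: is_comp_def)

lemma is_comp_Nil[simp]: "is_comp []"
  by (auto simp: is_comp_def)

lemma cutp_props:
  "is_comp a \<Longrightarrow> x \<in> Sset a \<Longrightarrow>
     Sset (cutp x a) = {y. x + y \<in> Sset a} \<and> sum_list (cutp x a) = sum_list a - x \<and> is_comp (cutp x a)"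
proof (induction x a rule: cutp.induct)
  case (1 xs) then show ?case by simp
next
  case (2 k) then show ?case by simp
next
  case (3 k a xs)
  from 3(3) obtain y where y: "y \<in> Sset xs" "Suc k = a + y" by (auto simp: Sset_Cons)
  have ih: "Sset (cutp y xs) = {z. y + z \<in> Sset xs} \<and> sum_list (cutp y xs) = sum_list xs - y \<and> is_comp (cutp y xs)"
    using 3(1)[of] 3(2) y by (metis add_diff_cancel_left' is_comp_Cons)
  have "cutp (Suc k) (a # xs) = cutp (Suc k - a) xs" by simp
  then have "cutp (Suc k) (a # xs) = cutp y xs" using y by simp
  moreover have "{z. Suc k + z \<in> Sset (a # xs)} = {z. y + z \<in> Sset xs}"
    using y by (auto simp: Sset_Cons image_iff)
  ultimately show ?case using ih y by simp
qed

lemma Lqs_prep: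
  assumes "is_comp a"
  shows "Lqs a (prep x e) = (if x \<in> Sset a then Lqs (cutp x a) e else 0)"
proof (cases "is_monomial e")
  case False then show ?thesis by (simp add: Lqs_alt)
next
  case mon: True
  define w where "w = flat e"
  have wc: "is_comp w" using mon flat_comp w_def by simp
  show ?thesis
  proof (cases "x = 0")
    case True then show ?thesis using mon by (simp add: Lqs_alt2[OF assms] flat_prep)
  next
    case xp: False
    have fl: "flat (prep x e) = x # w" using mon xp by (simp add: flat_prep w_def)
    show ?thesis
    proof (cases "x \<in> Sset a")
      case False
      have "x \<in> Sset (x # w)" using zero_in_Sset[of w] by (auto simp: Sset_Cons image_iff)
      then have "\<not> Sset (x # w) \<subseteq> Sset a" using False by blast
      then show ?thesis using False by (simp add: Lqs_alt2[OF assms] fl)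
    next
      case True
      note cp = cutp_props[OF assms True]
      have le: "x \<le> sum_list a" using True Sset_le by blast
      have "Lqs (cutp x a) e = (if sum_list w = sum_list a - x \<and> Sset w \<subseteq> {y. x + y \<in> Sset a} then 1 else 0)"
        using mon cp by (simp add: Lqs_alt2 w_def)
      moreover have "Lqs a (prep x e) = (if x + sum_list w = sum_list a \<and> Sset (x # w) \<subseteq> Sset a then 1 else 0)"
        using mon by (simp add: Lqs_alt2[OF assms] fl)
      moreover have "Sset (x # w) \<subseteq> Sset a \<longleftrightarrow> Sset w \<subseteq> {y. x + y \<in> Sset a}"
        using True by (auto simp: Sset_Cons)
      ultimately show ?thesis using True le by auto
    qed
  qed
qed

lemma prep_decomp: "prep (f 0) (\<lambda>j. f (Suc j)) = f"
  by (rule ext, case_tac x) auto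

lemma prep_inj: "prep s a = prep s' a' \<longleftrightarrow> s = s' \<and> a = a'"
proof
  assume h: "prep s a = prep s' a'"
  have "s = s'" using fun_cong[OF h, of 0] by simp
  moreover have "a = a'" using fun_cong[OF h, of "Suc _"] by (intro ext) simp
  ultimately show "s = s' \<and> a = a'" ..
qed simp

definition Pset :: "(nat \<Rightarrow> nat) \<Rightarrow> ((nat \<Rightarrow> nat) \<times> (nat \<Rightarrow> nat)) set" where
  "Pset e = {(a,b). \<forall>i. a i + b i = e i}"

lemma fmul_Pset: "fmul f g e = (if is_monomial e then (\<Sum>(a,b)\<in>Pset e. f a * g b) else 0)"
  by (simp add: fmul_def Pset_def)

lemma finite_Pset:
  assumes "is_monomial e" shows "finite (Pset e)"
proof -
  let ?Z = "{i. e i \<noteq> 0}"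
  let ?B = "{f. \<forall>x. (x \<in> ?Z \<longrightarrow> f x \<in> {0..Max (e ` ?Z)}) \<and> (x \<notin> ?Z \<longrightarrow> f x = 0)}"
  have fz: "finite ?Z" using assms by (simp add: is_monomial_def)
  have fB: "finite ?B" by (rule finite_set_of_finite_funs) (use fz in auto)
  have "Pset e \<subseteq> ?B \<times> ?B"
  proof
    fix p assume "p \<in> Pset e"
    then obtain a b where p: "p = (a,b)" "\<forall>i. a i + b i = e i" by (auto simp: Pset_def)
    have "\<And>i. i \<in> ?Z \<Longrightarrow> e i \<le> Max (e ` ?Z)" using fz by (intro Max_ge) auto
    have "\<And>i. a i \<le> e i" "\<And>i. b i \<le> e i" using p(2) by (metis le_add1, metis le_add2)
    moreover have "\<And>i. e i = 0 \<Longrightarrow> a i = 0" "\<And>i. e i = 0 \<Longrightarrow> b i = 0" using p(2) by (metis add_is_0)+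
    ultimately have "a \<in> ?B" "b \<in> ?B"
      using \<open>\<And>i. i \<in> ?Z \<Longrightarrow> e i \<le> Max (e ` ?Z)\<close> by (auto, meson le_trans, meson le_trans)
    then show "p \<in> ?B \<times> ?B" using p by simp
  qed
  then show ?thesis using fB by (meson finite_SigmaI finite_subset)
qed

lemma fmul_prep:
  "fmul f g (prep x e) = (\<Sum>s\<in>{0..x}. fmul (\<lambda>a. f (prep s a)) (\<lambda>b. g (prep (x - s) b)) e)"
proof (cases "is_monomial e")
  case False then show ?thesis by (simp add: fmul_Pset)
next
  case mon: True
  define \<phi> where "\<phi> = (\<lambda>(s::nat, (a::nat\<Rightarrow>nat, b::nat\<Rightarrow>nat)). (prep s a, prep (x - s) b))"
  have img: "Pset (prep x e) = \<phi> ` (SIGMA s:{0..x}. Pset e)"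
  proof (rule set_eqI, rule iffI)
    fix p assume "p \<in> Pset (prep x e)"
    then obtain a b where p: "p = (a,b)" "\<forall>i. a i + b i = prep x e i" by (auto simp: Pset_def)
    have a0: "a 0 \<le> x" "b 0 = x - a 0" using p(2)[rule_format, of 0] by auto
    have "(a 0, ((\<lambda>j. a (Suc j)), (\<lambda>j. b (Suc j)))) \<in> (SIGMA s:{0..x}. Pset e)"
      using p(2) a0 by (auto simp: Pset_def)
    moreover have "\<phi> (a 0, ((\<lambda>j. a (Suc j)), (\<lambda>j. b (Suc j)))) = p"
      using p a0 prep_decomp[of a] prep_decomp[of b] by (simp add: \<phi>_def)
    ultimately show "p \<in> \<phi> ` (SIGMA s:{0..x}. Pset e)" by (metis image_eqI)
  next
    fix p assume "p \<in> \<phi> ` (SIGMA s:{0..x}. Pset e)"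
    then obtain s a b where "s \<le> x" "(a,b) \<in> Pset e" "p = \<phi> (s,(a,b))" by auto
    then show "p \<in> Pset (prep x e)"
      by (auto simp: \<phi>_def Pset_def prep_def split: nat.splits)
  qed
  have inj: "inj_on \<phi> (SIGMA s:{0..x}. Pset e)"
    by (auto simp: inj_on_def \<phi>_def prep_inj)
  have "fmul f g (prep x e) = (\<Sum>p\<in>\<phi> ` (SIGMA s:{0..x}. Pset e). (case p of (a,b) \<Rightarrow> f a * g b))"
    using mon by (simp add: fmul_Pset img)
  also have "\<dots> = (\<Sum>q\<in>(SIGMA s:{0..x}. Pset e). (case \<phi> q of (a,b) \<Rightarrow> f a * g b))"
    by (subst sum.reindex[OF inj]) (simp add: comp_def)
  also have "\<dots> = (\<Sum>(s,ab)\<in>(SIGMA s:{0..x}. Pset e). (case ab of (a,b) \<Rightarrow> f (prep s a) * g (prep (x - s) b)))"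
    by (intro sum.cong) (auto simp: \<phi>_def)
  also have "\<dots> = (\<Sum>s\<in>{0..x}. \<Sum>(a,b)\<in>Pset e. f (prep s a) * g (prep (x - s) b))"
    by (rule sum.Sigma[symmetric]) (auto simp: finite_Pset[OF mon])
  also have "\<dots> = (\<Sum>s\<in>{0..x}. fmul (\<lambda>a. f (prep s a)) (\<lambda>b. g (prep (x - s) b)) e)"
    using mon by (simp add: fmul_Pset)
  finally show ?thesis .
qed

lemma fmul_zero_left[simp]: "fmul (\<lambda>_. 0) g = (\<lambda>_. 0)"
  by (rule ext) (simp add: fmul_Pset)

lemma fmul_zero_right[simp]: "fmul f (\<lambda>_. 0) = (\<lambda>_. 0)"
  by (rule ext) (simp add: fmul_Pset)

lemma fmul_at_zero: "fmul f g (\<lambda>_. 0) = f (\<lambda>_. 0) * g (\<lambda>_. 0)"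
proof -
  have "Pset (\<lambda>_. 0) = {((\<lambda>_. 0), (\<lambda>_. 0))}" by (auto simp: Pset_def fun_eq_iff)
  moreover have "is_monomial (\<lambda>_. 0::nat)" by (simp add: is_monomial_def)
  ultimately show ?thesis by (simp add: fmul_Pset)
qed

lemma fmul_comm: "fmul f g = fmul g f"
proof (rule ext)
  fix e
  have "(\<Sum>(a,b)\<in>Pset e. f a * g b) = (\<Sum>(a,b)\<in>Pset e. g a * f b)"
  proof -
    have inj: "inj_on prod.swap (Pset e)" by (rule inj_on_inverseI[where g=prod.swap]) simp
    have im: "prod.swap ` Pset e = Pset e" by (auto simp: Pset_def image_iff add.commute)
    have "(\<Sum>(a,b)\<in>Pset e. g a * f b) = (\<Sum>p\<in>prod.swap ` Pset e. case p of (a,b) \<Rightarrow> g a * f b)"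
      using im by simp
    also have "\<dots> = (\<Sum>p\<in>Pset e. case prod.swap p of (a,b) \<Rightarrow> g a * f b)"
      by (subst sum.reindex[OF inj]) (simp add: comp_def)
    also have "\<dots> = (\<Sum>(a,b)\<in>Pset e. f a * g b)"
      by (intro sum.cong) (auto simp: mult.commute)
    finally show ?thesis by simp
  qed
  then show "fmul f g e = fmul g f e" by (simp add: fmul_Pset)
qed

abbreviation FF :: "nat list \<Rightarrow> nat list \<Rightarrow> fps_int" where
  "FF a b \<equiv> fmul (Lqs a) (Lqs b)"

abbreviation zf :: "nat \<Rightarrow> nat" where "zf \<equiv> (\<lambda>_. 0)"

lemma FF_prep:
  assumes "is_comp a" "is_comp b"
  shows "FF a b (prep x e) = (\<Sum>s\<in>{0..x}. if s \<in> Sset a \<and> x - s \<in> Sset b then FF (cutp s a) (cutp (x - s) b) e else 0)"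
proof -
  have la: "(\<lambda>c. Lqs a (prep s c)) = (if s \<in> Sset a then Lqs (cutp s a) else (\<lambda>_. 0))" for s
    by (rule ext) (simp add: Lqs_prep[OF assms(1)])
  have lb: "(\<lambda>c. Lqs b (prep s c)) = (if s \<in> Sset b then Lqs (cutp s b) else (\<lambda>_. 0))" for s
    by (rule ext) (simp add: Lqs_prep[OF assms(2)])
  show ?thesis unfolding fmul_prep la lb by (intro sum.cong) auto
qed

lemma flat_zero: "flat zf = []"
  by (simp add: flat_def)

lemma monomial_zero: "is_monomial zf"
  by (simp add: is_monomial_def)

lemma comp_empty_iff:
  assumes "is_comp w" shows "w = [] \<longleftrightarrow> sum_list w = 0"
proof
  assume "sum_list w = 0"
  then show "w = []" using sum_list_pos_comp[OF assms] by (metis less_irrefl)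
qed simp

lemma Lqs_zero: "is_comp a \<Longrightarrow> Lqs a zf = (if a = [] then 1 else 0)"
  by (simp add: Lqs_alt2 flat_zero monomial_zero comp_empty_iff)

lemma FF_zero: "is_comp a \<Longrightarrow> is_comp b \<Longrightarrow> FF a b zf = (if a = [] \<and> b = [] then 1 else 0)"
  by (simp add: fmul_at_zero Lqs_zero)

lemma FF_single:
  assumes "is_comp a" "is_comp b"
  shows "FF a b (prep y zf) = (if y = sum_list a + sum_list b then 1 else 0)"
proof -
  have "FF a b (prep y zf) = (\<Sum>s\<in>{0..y}. if s = sum_list a then (if y = sum_list a + sum_list b then 1 else 0) else 0)"
  proof (unfold FF_prep[OF assms], intro sum.cong refl)
    fix s assume s: "s \<in> {0..y}"
    show "(if s \<in> Sset a \<and> y - s \<in> Sset b then FF (cutp s a) (cutp (y - s) b) zf else 0) =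
          (if s = sum_list a then (if y = sum_list a + sum_list b then 1 else 0) else 0)"
    proof (cases "s \<in> Sset a \<and> y - s \<in> Sset b")
      case True
      note ca = cutp_props[OF assms(1) conjunct1[OF True]]
      note cb = cutp_props[OF assms(2) conjunct2[OF True]]
      have "s \<le> sum_list a" "y - s \<le> sum_list b" using True Sset_le by auto
      then show ?thesis using True ca cb s
        by (auto simp: FF_zero comp_empty_iff)
    next
      case False
      then show ?thesis using s by auto
    qed
  qed
  also have "\<dots> = (if y = sum_list a + sum_list b then 1 else 0)"
    by (subst sum.delta) auto
  finally show ?thesis .
qed

definition Kc :: "nat list \<Rightarrow> nat list \<Rightarrow> nat \<Rightarrow> nat" where
  "Kc a b t = card {s\<in>{0..t}. s \<in> Sset a \<and> t - s \<in> Sset b}"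

lemma FF_double:
  assumes "is_comp a" "is_comp b" "t \<le> sum_list a + sum_list b"
  shows "FF a b (prep t (prep (sum_list a + sum_list b - t) zf)) = int (Kc a b t)"
proof -
  have "FF a b (prep t (prep (sum_list a + sum_list b - t) zf)) = (\<Sum>s\<in>{0..t}. if s \<in> Sset a \<and> t - s \<in> Sset b then 1 else 0)"
  proof (unfold FF_prep[OF assms(1,2)], intro sum.cong refl)
    fix s assume s: "s \<in> {0..t}"
    show "(if s \<in> Sset a \<and> t - s \<in> Sset b then FF (cutp s a) (cutp (t - s) b) (prep (sum_list a + sum_list b - t) zf) else 0) =
          (if s \<in> Sset a \<and> t - s \<in> Sset b then 1 else 0)"
    proof (cases "s \<in> Sset a \<and> t - s \<in> Sset b")
      case True
      note ca = cutp_props[OF assms(1) conjunct1[OF True]]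
      note cb = cutp_props[OF assms(2) conjunct2[OF True]]
      have "s \<le> sum_list a" "t - s \<le> sum_list b" using True Sset_le by auto
      then show ?thesis using True ca cb s
        by (auto simp: FF_single)
    next
      case False
      show ?thesis unfolding if_not_P[OF False] by (rule refl)
    qed
  qed
  also have "\<dots> = int (Kc a b t)"
    unfolding Kc_def by (simp add: sum.inter_filter[symmetric])
  finally show ?thesis .
qed

lemma FF_size:
  assumes "is_comp a" "is_comp b" "is_comp c" "is_comp d" "FF a b = FF c d"
  shows "sum_list a + sum_list b = sum_list c + sum_list d"
  using FF_single[OF assms(1,2), of "sum_list a + sum_list b"] FF_single[OF assms(3,4), of "sum_list a + sum_list b"] assms(5)
  by (auto split: if_splits)

lemma Sset_Cons_iff: "s \<in> Sset (x # w) \<longleftrightarrow> s = 0 \<or> (x \<le> s \<and> s - x \<in> Sset w)"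
  by (auto simp: Sset_Cons image_iff) (metis add_diff_inverse_nat not_le)

lemma Sset_pos_hd: "t \<in> Sset b \<Longrightarrow> 0 < t \<Longrightarrow> b \<noteq> [] \<and> hd b \<le> t"
  by (cases b) (auto simp: Sset_Cons_iff)

lemma cutp_Cons_add: "0 < x \<Longrightarrow> cutp (x + r) (x # w) = cutp r w"
  by (cases x) auto

lemma Kc_Cons:
  assumes "0 < x"
  shows "Kc (x # U) V t = (if t \<in> Sset V then 1 else 0) + (if x \<le> t then Kc U V (t - x) else 0)"
proof -
  let ?A0 = "{s\<in>{0..t}. s = 0 \<and> t - s \<in> Sset V}"
  let ?A1 = "{s\<in>{0..t}. x \<le> s \<and> s - x \<in> Sset U \<and> t - s \<in> Sset V}"
  have split: "{s\<in>{0..t}. s \<in> Sset (x # U) \<and> t - s \<in> Sset V} = ?A0 \<union> ?A1"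
    by (auto simp: Sset_Cons_iff)
  have disj: "?A0 \<inter> ?A1 = {}" using assms by auto
  have c0: "card ?A0 = (if t \<in> Sset V then 1 else 0)"
  proof -
    have "?A0 = (if t \<in> Sset V then {0} else {})" by auto
    then show ?thesis by simp
  qed
  have c1: "card ?A1 = (if x \<le> t then Kc U V (t - x) else 0)"
  proof (cases "x \<le> t")
    case True
    have "?A1 = (\<lambda>r. r + x) ` {r\<in>{0..t - x}. r \<in> Sset U \<and> (t - x) - r \<in> Sset V}"
    proof (rule set_eqI, rule iffI)
      fix s assume "s \<in> ?A1"
      then show "s \<in> (\<lambda>r. r + x) ` {r\<in>{0..t - x}. r \<in> Sset U \<and> (t - x) - r \<in> Sset V}"
        by (intro image_eqI[where x="s - x"]) auto
    next
      fix s assume "s \<in> (\<lambda>r. r + x) ` {r\<in>{0..t - x}. r \<in> Sset U \<and> (t - x) - r \<in> Sset V}"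
      then obtain r where r: "r \<le> t - x" "r \<in> Sset U" "t - x - r \<in> Sset V" "s = r + x" by auto
      have "t - s = t - x - r" using r(4) by simp
      then show "s \<in> ?A1" using r True by auto
    qed
    moreover have "inj_on (\<lambda>r. r + x) A" for A by (simp add: inj_on_def)
    ultimately show ?thesis using True by (simp add: card_image Kc_def)
  next
    case False then have "?A1 = {}" by auto
    then show ?thesis using False by simp
  qed
  have "Kc (x # U) V t = card (?A0 \<union> ?A1)" unfolding Kc_def split by (rule refl)
  also have "\<dots> = card ?A0 + card ?A1" by (rule card_Un_disjoint) (use disj in auto)
  finally show ?thesis using c0 c1 by simp
qed

lemma Kc_comm: "Kc U V t = Kc V U t"
proof -
  have "{s\<in>{0..t}. s \<in> Sset V \<and> t - s \<in> Sset U} = (\<lambda>s. t - s) ` {s\<in>{0..t}. s \<in> Sset U \<and> t - s \<in> Sset V}"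
  proof (rule set_eqI, rule iffI)
    fix s assume "s \<in> {s\<in>{0..t}. s \<in> Sset V \<and> t - s \<in> Sset U}"
    then show "s \<in> (\<lambda>s. t - s) ` {s\<in>{0..t}. s \<in> Sset U \<and> t - s \<in> Sset V}"
      by (intro image_eqI[where x="t - s"]) auto
  qed auto
  moreover have "inj_on (\<lambda>s. t - s) {s\<in>{0..t}. s \<in> Sset U \<and> t - s \<in> Sset V}"
    by (auto simp: inj_on_def)
  ultimately show ?thesis unfolding Kc_def by (simp add: card_image)
qed

lemma Kc_zero: "Kc U V 0 = 1"
proof -
  have "{s\<in>{0..0::nat}. s \<in> Sset U \<and> 0 - s \<in> Sset V} = {0}" by auto
  then show ?thesis by (simp add: Kc_def)
qed

lemma Sset_inj: "is_comp u \<Longrightarrow> is_comp v \<Longrightarrow> Sset u = Sset v \<Longrightarrow> u = v"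
proof (induction u arbitrary: v)
  case Nil
  show ?case
  proof (cases v)
    case (Cons h v')
    then have "h \<in> Sset v" by (simp add: Sset_Cons_iff)
    then have "h \<in> Sset []" using Nil.prems(3) by blast
    then have "h = 0" by simp
    then show ?thesis using Nil.prems(2) Cons by simp
  qed simp
next
  case (Cons h u')
  show ?case
  proof (cases v)
    case Nil
    then have "h \<in> Sset (h # u')" by (simp add: Sset_Cons_iff)
    then show ?thesis using Cons.prems Nil by simp
  next
    case (Cons g v')
    have hp: "0 < h" "0 < g" using Cons.prems Cons by auto
    have "h \<in> Sset (g # v')" using Cons.prems Cons by (metis Sset_Cons_iff cancel_comm_monoid_add_class.diff_cancel le_refl zero_in_Sset)
    then have "g \<le> h" using hp by (auto simp: Sset_Cons_iff)
    moreover have "g \<in> Sset (h # u')" using Cons.prems Cons by (metis Sset_Cons_iff cancel_comm_monoid_add_class.diff_cancel le_refl zero_in_Sset)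
    then have "h \<le> g" using hp by (auto simp: Sset_Cons_iff)
    ultimately have hg: "h = g" by simp
    have "Sset u' = Sset v'"
    proof (rule set_eqI)
      fix y
      have "y \<in> Sset u' \<longleftrightarrow> h + y \<in> Sset (h # u')" using hp by (simp add: Sset_Cons_iff)
      also have "\<dots> \<longleftrightarrow> h + y \<in> Sset (g # v')" using Cons.prems Cons by simp
      also have "\<dots> \<longleftrightarrow> y \<in> Sset v'" using hp hg by (simp add: Sset_Cons_iff)
      finally show "y \<in> Sset u' \<longleftrightarrow> y \<in> Sset v'" .
    qed
    then have "u' = v'" using Cons.IH Cons.prems Cons by simp
    then show ?thesis using hg Cons by simp
  qed
qed

lemma pair_eq_iff: "{#a, b#} = {#c, d#} \<longleftrightarrow> (a = c \<and> b = d) \<or> (a = d \<and> b = c)"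
proof
  assume eq: "{#a, b#} = {#c, d#}"
  show "(a = c \<and> b = d) \<or> (a = d \<and> b = c)"
  proof (cases "a = c")
    case True
    then have "{#b#} = {#d#}" using eq by simp
    then show ?thesis using True by simp
  next
    case False
    have "c \<in># {#b#}" by (rule insert_noteq_member[OF eq False])
    then have cb: "c = b" by simp
    have "a \<in># {#c, d#}" using eq by (metis union_single_eq_member)
    then have "a = d" using False by simp
    then show ?thesis using cb by simp
  qed
qed (auto simp: add_mset_commute)

lemma Sset_Cons_le: "s \<le> x \<Longrightarrow> s \<in> Sset (x # U) \<longleftrightarrow> s = 0 \<or> s = x"
  by (auto simp: Sset_Cons_iff)

lemma cutp_Cons_self: "0 < x \<Longrightarrow> cutp x (x # U) = U"
  using cutp_Cons_add[of x 0 U] by simp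

lemma sum_two:
  assumes "0 < (x::nat)" "\<And>s. 0 < s \<Longrightarrow> s < x \<Longrightarrow> h s = 0"
  shows "(\<Sum>s\<in>{0..x}. h s) = h 0 + h x"
proof -
  have "(\<Sum>s\<in>{0..x}. h s) = (\<Sum>s\<in>{0, x}. h s)"
    by (rule sum.mono_neutral_right) (use assms in auto)
  then show ?thesis using assms by simp
qed

lemma sum_three:
  assumes "0 < (x::nat)" "\<And>s. s \<le> 2 * x \<Longrightarrow> s \<noteq> 0 \<Longrightarrow> s \<noteq> x \<Longrightarrow> s \<noteq> 2 * x \<Longrightarrow> h s = 0"
  shows "(\<Sum>s\<in>{0..2 * x}. h s) = h 0 + h x + h (2 * x)"
proof -
  have "(\<Sum>s\<in>{0..2 * x}. h s) = (\<Sum>s\<in>{0, x, 2 * x}. h s)"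
    by (rule sum.mono_neutral_right) (use assms in auto)
  then show ?thesis using assms by (simp add: add.assoc)
qed

lemma G1:
  assumes "0 < x" "is_comp U" "is_comp V"
  shows "FF (x # U) V (prep x e) = (if x \<in> Sset V then FF (x # U) (cutp x V) e else 0) + FF U V e"
proof -
  have cx: "is_comp (x # U)" using assms by simp
  have "FF (x # U) V (prep x e) = (\<Sum>s\<in>{0..x}. if s \<in> Sset (x # U) \<and> x - s \<in> Sset V then FF (cutp s (x # U)) (cutp (x - s) V) e else 0)"
    by (rule FF_prep[OF cx assms(3)])
  also have "\<dots> = (if x \<in> Sset V then FF (x # U) (cutp x V) e else 0) + FF U V e"
    by (subst sum_two) (use assms in \<open>auto simp: Sset_Cons_le cutp_Cons_self\<close>)
  finally show ?thesis .
qed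

lemma G2:
  assumes "0 < x" "is_comp U" "is_comp V"
  shows "FF (x # U) (x # V) (prep (2 * x) e) =
     (if x \<in> Sset V then FF (x # U) (cutp x V) e else 0) + FF U V e + (if x \<in> Sset U then FF (cutp x U) (x # V) e else 0)"
proof -
  have cx: "is_comp (x # U)" "is_comp (x # V)" using assms by auto
  have m2: "x + x \<in> Sset (x # W) \<longleftrightarrow> x \<in> Sset W" for W by (auto simp: Sset_Cons_iff)
  have c2: "cutp (x + x) (x # W) = cutp x W" for W using cutp_Cons_add[OF assms(1), of x W] by simp
  have "FF (x # U) (x # V) (prep (2 * x) e) = (\<Sum>s\<in>{0..2 * x}. if s \<in> Sset (x # U) \<and> 2 * x - s \<in> Sset (x # V) then FF (cutp s (x # U)) (cutp (2 * x - s) (x # V)) e else 0)"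
    by (rule FF_prep[OF cx])
  also have "\<dots> = (if x \<in> Sset V then FF (x # U) (cutp x V) e else 0) + FF U V e + (if x \<in> Sset U then FF (cutp x U) (x # V) e else 0)"
  proof (subst sum_three[OF assms(1)])
    fix s assume s: "s \<le> 2 * x" "s \<noteq> 0" "s \<noteq> x" "s \<noteq> 2 * x"
    show "(if s \<in> Sset (x # U) \<and> 2 * x - s \<in> Sset (x # V) then FF (cutp s (x # U)) (cutp (2 * x - s) (x # V)) e else 0) = 0"
    proof (cases "s < x")
      case True then show ?thesis using s by (auto simp: Sset_Cons_iff)
    next
      case False then have "0 < 2 * x - s" "2 * x - s < x" using s by auto
      then show ?thesis by (auto simp: Sset_Cons_iff)
    qed
  next
    show "(if 0 \<in> Sset (x # U) \<and> 2 * x - 0 \<in> Sset (x # V) then FF (cutp 0 (x # U)) (cutp (2 * x - 0) (x # V)) e else 0) +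
          (if x \<in> Sset (x # U) \<and> 2 * x - x \<in> Sset (x # V) then FF (cutp x (x # U)) (cutp (2 * x - x) (x # V)) e else 0) +
          (if 2 * x \<in> Sset (x # U) \<and> 2 * x - 2 * x \<in> Sset (x # V) then FF (cutp (2 * x) (x # U)) (cutp (2 * x - 2 * x) (x # V)) e else 0) =
          (if x \<in> Sset V then FF (x # U) (cutp x V) e else 0) + FF U V e + (if x \<in> Sset U then FF (cutp x U) (x # V) e else 0)"
      using assms by (simp add: m2 c2 mult_2 cutp_Cons_self Sset_Cons_le)
  qed
  finally show ?thesis .
qed

lemma tie_extract:
  assumes "0 < x" "is_comp U" "is_comp V"
  shows "FF U V e = FF (x # U) (x # V) (prep x (prep x e)) - FF (x # U) (x # V) (prep (2 * x) e)"
proof -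
  have xV: "x \<in> Sset (x # V)" by (simp add: Sset_Cons_iff)
  have "FF (x # U) (x # V) (prep x (prep x e)) = FF (x # U) V (prep x e) + FF U (x # V) (prep x e)"
    using G1[OF assms(1,2), of "x # V"] assms xV by (simp add: cutp_Cons_self)
  also have "FF U (x # V) (prep x e) = FF (x # V) U (prep x e)" by (simp add: fmul_comm)
  finally have A: "FF (x # U) (x # V) (prep x (prep x e)) =
     (if x \<in> Sset V then FF (x # U) (cutp x V) e else 0) + FF U V e +
     ((if x \<in> Sset U then FF (x # V) (cutp x U) e else 0) + FF V U e)"
    using G1[OF assms(1,2,3)] G1[OF assms(1,3,2)] by simp
  have B: "FF V U e = FF U V e" "FF (x # V) (cutp x U) e = FF (cutp x U) (x # V) e" by (simp_all add: fmul_comm)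
  show ?thesis using A B G2[OF assms] by simp
qed

lemma nontie_extract:
  assumes "0 < x" "is_comp U" "is_comp V" "x \<notin> Sset V"
  shows "FF (x # U) V (prep x e) = FF U V e"
  using G1[OF assms(1,2,3)] assms(4) by simp

lemma Kc_small:
  assumes "0 < t" "t < x" "b = [] \<or> x \<le> hd b"
  shows "Kc (x # a) b t = 0"
proof -
  have "t \<notin> Sset b" using Sset_pos_hd[of t b] assms by auto
  then show ?thesis using assms by (simp add: Kc_Cons)
qed

lemma Kc_at: "0 < x \<Longrightarrow> Kc (x # a) b x = (if x \<in> Sset b then 1 else 0) + 1"
  by (simp add: Kc_Cons Kc_zero)

lemma step:
  assumes IH: "\<And>a b c d. is_comp a \<Longrightarrow> is_comp b \<Longrightarrow> is_comp c \<Longrightarrow> is_comp d \<Longrightarrow>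
                 sum_list a + sum_list b < n \<Longrightarrow> FF a b = FF c d \<Longrightarrow> {#a, b#} = {#c, d#}"
    and ca: "is_comp (x # a')" and cb: "is_comp b" and cc: "is_comp (y # c')" and cd: "is_comp d"
    and ob: "b = [] \<or> x \<le> hd b" and od: "d = [] \<or> y \<le> hd d"
    and eq: "FF (x # a') b = FF (y # c') d" and n: "sum_list (x # a') + sum_list b = n"
  shows "{#x # a', b#} = {#y # c', d#}"
proof -
  have xp: "0 < x" "is_comp a'" using ca by auto
  have yp: "0 < y" "is_comp c'" using cc by auto
  have n2: "sum_list (y # c') + sum_list d = n" using FF_size[OF ca cb cc cd eq] n by simp
  have K: "Kc (x # a') b t = Kc (y # c') d t" if "t \<le> n" for t
    using FF_double[OF ca cb, of t] FF_double[OF cc cd, of t] eq n n2 that by simp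
  have xn: "x \<le> n" "y \<le> n" using n n2 by auto
  have xy: "x = y"
  proof (rule ccontr)
    assume "x \<noteq> y"
    then consider "x < y" | "y < x" by linarith
    then show False
    proof cases
      case 1
      then have "Kc (y # c') d x = 0" using Kc_small[OF xp(1) 1 od] by simp
      then show False using K[OF xn(1)] Kc_at[OF xp(1), of a' b] by simp
    next
      case 2
      then have "Kc (x # a') b y = 0" using Kc_small[OF yp(1) 2 ob] by simp
      then show False using K[OF xn(2)] Kc_at[OF yp(1), of c' d] by simp
    qed
  qed
  have ceq: "y # c' = x # c'" using xy by simp
  have "Kc (x # a') b x = Kc (x # c') d x" using K[OF xn(1), unfolded ceq] .
  then have "(if x \<in> Sset b then 1 else 0) + 1 = (if x \<in> Sset d then 1 else (0::nat)) + 1"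
    unfolding Kc_at[OF xp(1)] .
  then have tie: "x \<in> Sset b \<longleftrightarrow> x \<in> Sset d" by (auto split: if_splits)
  show ?thesis
  proof (cases "x \<in> Sset b")
    case True
    have hb: "b \<noteq> [] \<and> hd b = x" using Sset_pos_hd[OF True xp(1)] ob by auto
    then obtain b' where b': "b = x # b'" by (cases b) auto
    have "x \<in> Sset d" using True tie by simp
    then have hd: "d \<noteq> [] \<and> hd d = x" using Sset_pos_hd[of x d] xp(1) od xy by auto
    then obtain d' where d': "d = x # d'" by (cases d) auto
    have cb': "is_comp b'" "is_comp d'" using cb cd b' d' by auto
    have "FF a' b' = FF c' d'"
    proof (rule ext)
      fix e
      show "FF a' b' e = FF c' d' e"
        using tie_extract[OF xp(1) xp(2) cb'(1), of e] tie_extract[OF xp(1) yp(2) cb'(2), of e] eq xy b' d' by simp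
    qed
    moreover have "sum_list a' + sum_list b' < n" using n b' xp by simp
    ultimately have "{#a', b'#} = {#c', d'#}" using IH[OF xp(2) cb'(1) yp(2) cb'(2)] by simp
    then show ?thesis using b' d' xy by (auto simp: pair_eq_iff)
  next
    case False
    have "x \<notin> Sset d" using False tie by simp
    have "FF a' b = FF c' d"
    proof (rule ext)
      fix e
      show "FF a' b e = FF c' d e"
        using nontie_extract[OF xp(1) xp(2) cb False, of e] nontie_extract[OF xp(1) yp(2) cd \<open>x \<notin> Sset d\<close>, of e] eq xy
        by metis
    qed
    moreover have "sum_list a' + sum_list b < n" using n xp by simp
    ultimately have "{#a', b#} = {#c', d#}" using IH[OF xp(2) cb yp(2) cd] by simp
    then consider "a' = c' \<and> b = d" | "a' = d \<and> b = c'" by (auto simp: pair_eq_iff)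
    then show ?thesis
    proof cases
      case 1 then show ?thesis using xy by simp
    next
      case 2
      have "Sset b = Sset a'"
      proof (rule set_eqI)
        fix t
        show "t \<in> Sset b \<longleftrightarrow> t \<in> Sset a'"
        proof (cases "t \<le> n")
          case True
          have "Kc (x # a') b t = Kc (x # b) a' t" using K[OF True] 2 xy by simp
          then have "(if t \<in> Sset b then 1 else 0) + (if x \<le> t then Kc a' b (t - x) else 0) =
                     (if t \<in> Sset a' then 1 else 0) + (if x \<le> t then Kc b a' (t - x) else (0::nat))"
            unfolding Kc_Cons[OF xp(1)] .
          moreover have "Kc b a' (t - x) = Kc a' b (t - x)" by (rule Kc_comm)
          ultimately show ?thesis by (auto split: if_splits)
        next
          case False
          then show ?thesis using Sset_le[of t b] Sset_le[of t a'] n by auto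
        qed
      qed
      then have "b = a'" using Sset_inj cb xp(2) by blast
      then show ?thesis using 2 xy by (simp add: add_mset_commute)
    qed
  qed
qed

lemma recover_aux:
  "\<forall>a b c d. is_comp a \<longrightarrow> is_comp b \<longrightarrow> is_comp c \<longrightarrow> is_comp d \<longrightarrow>
     sum_list a + sum_list b = n \<longrightarrow> FF a b = FF c d \<longrightarrow> {#a, b#} = {#c, d#}"
proof (induction n rule: less_induct)
  case (less n)
  have IH: "\<And>a b c d. is_comp a \<Longrightarrow> is_comp b \<Longrightarrow> is_comp c \<Longrightarrow> is_comp d \<Longrightarrow>
                 sum_list a + sum_list b < n \<Longrightarrow> FF a b = FF c d \<Longrightarrow> {#a, b#} = {#c, d#}"
    using less by blast
  show ?case
  proof (intro allI impI)
    fix a b c d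
    assume ca: "is_comp a" and cb: "is_comp b" and cc: "is_comp c" and cd: "is_comp d"
      and n: "sum_list a + sum_list b = n" and eq: "FF a b = FF c d"
    have n2: "sum_list c + sum_list d = n" using FF_size[OF ca cb cc cd eq] n by simp
    show "{#a, b#} = {#c, d#}"
    proof (cases "n = 0")
      case True
      then have "a = []" "b = []" "c = []" "d = []" using n n2 ca cb cc cd comp_empty_iff by auto
      then show ?thesis by simp
    next
      case False
      have ord: "\<exists>u v. {#u, v#} = {#p, q#} \<and> u \<noteq> [] \<and> (v = [] \<or> hd u \<le> hd v) \<and> FF u v = FF p q"
        if "sum_list p + sum_list q = n" for p q
      proof (cases "p = []")
        case True
        then have "q \<noteq> []" using that False by auto
        then show ?thesis using True by (intro exI[of _ q] exI[of _ p]) (auto simp: fmul_comm add_mset_commute)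
      next
        case pne: False
        show ?thesis
        proof (cases "q = [] \<or> hd p \<le> hd q")
          case True then show ?thesis using pne by (intro exI[of _ p] exI[of _ q]) auto
        next
          case False then show ?thesis by (intro exI[of _ q] exI[of _ p]) (auto simp: fmul_comm add_mset_commute)
        qed
      qed
      obtain u v where uv: "{#u, v#} = {#a, b#}" "u \<noteq> []" "v = [] \<or> hd u \<le> hd v" "FF u v = FF a b"
        using ord[OF n] by blast
      obtain u' v' where uv': "{#u', v'#} = {#c, d#}" "u' \<noteq> []" "v' = [] \<or> hd u' \<le> hd v'" "FF u' v' = FF c d"
        using ord[OF n2] by blast
      have cuv: "is_comp u" "is_comp v" "is_comp u'" "is_comp v'" "sum_list u + sum_list v = n"
        using uv(1) uv'(1) ca cb cc cd n by (auto simp: pair_eq_iff)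
      obtain x a' where u: "u = x # a'" using uv(2) by (cases u) auto
      obtain y c' where u': "u' = y # c'" using uv'(2) by (cases u') auto
      have "{#x # a', v#} = {#y # c', v'#}"
        by (rule step[OF IH]) (use cuv u u' uv uv' eq in auto)
      then show ?thesis using uv(1) uv'(1) u u' by simp
    qed
  qed
qed

lemma recover:
  "is_comp a \<Longrightarrow> is_comp b \<Longrightarrow> is_comp c \<Longrightarrow> is_comp d \<Longrightarrow> FF a b = FF c d \<Longrightarrow> {#a, b#} = {#c, d#}"
  using recover_aux by blast

lemma L_positive_nonneg: "L_positive f \<Longrightarrow> 0 \<le> f e"
  unfolding L_positive_def by (auto intro!: sum_nonneg mult_nonneg_nonneg simp: Lqs_nonneg)

lemma L_positive_zero: "L_positive (\<lambda>e. 0)"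
  unfolding L_positive_def by (rule exI[of _ "{}"]) simp

lemma L_positive_add:
  assumes "L_positive f" "L_positive g"
  shows "L_positive (\<lambda>e. f e + g e)"
proof -
  obtain S1 c1 where 1: "finite S1" "\<forall>\<gamma>\<in>S1. is_comp \<gamma>" "f = (\<lambda>e. \<Sum>\<gamma>\<in>S1. int (c1 \<gamma>) * Lqs \<gamma> e)"
    using assms(1) unfolding L_positive_def by blast
  obtain S2 c2 where 2: "finite S2" "\<forall>\<gamma>\<in>S2. is_comp \<gamma>" "g = (\<lambda>e. \<Sum>\<gamma>\<in>S2. int (c2 \<gamma>) * Lqs \<gamma> e)"
    using assms(2) unfolding L_positive_def by blast
  define c where "c = (\<lambda>\<gamma>. (if \<gamma> \<in> S1 then c1 \<gamma> else 0) + (if \<gamma> \<in> S2 then c2 \<gamma> else 0))"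
  have "(\<lambda>e. f e + g e) = (\<lambda>e. \<Sum>\<gamma>\<in>S1 \<union> S2. int (c \<gamma>) * Lqs \<gamma> e)"
  proof (rule ext)
    fix e
    have "(\<Sum>\<gamma>\<in>S1 \<union> S2. int (c \<gamma>) * Lqs \<gamma> e) =
          (\<Sum>\<gamma>\<in>S1 \<union> S2. (if \<gamma> \<in> S1 then int (c1 \<gamma>) * Lqs \<gamma> e else 0) +
                          (if \<gamma> \<in> S2 then int (c2 \<gamma>) * Lqs \<gamma> e else 0))"
      unfolding c_def by (intro sum.cong) (auto simp: distrib_right)
    also have "\<dots> = (\<Sum>\<gamma>\<in>S1 \<union> S2. if \<gamma> \<in> S1 then int (c1 \<gamma>) * Lqs \<gamma> e else 0) +
          (\<Sum>\<gamma>\<in>S1 \<union> S2. if \<gamma> \<in> S2 then int (c2 \<gamma>) * Lqs \<gamma> e else 0)"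
      by (rule sum.distrib)
    also have "\<dots> = (\<Sum>\<gamma>\<in>S1. int (c1 \<gamma>) * Lqs \<gamma> e) + (\<Sum>\<gamma>\<in>S2. int (c2 \<gamma>) * Lqs \<gamma> e)"
    proof -
      have u1: "(S1 \<union> S2) \<inter> S1 = S1" "(S1 \<union> S2) \<inter> S2 = S2" by auto
      have fin: "finite (S1 \<union> S2)" using 1(1) 2(1) by simp
      show ?thesis
        by (simp only: sum.inter_restrict[OF fin, symmetric] u1)
    qed
    finally show "f e + g e = (\<Sum>\<gamma>\<in>S1 \<union> S2. int (c \<gamma>) * Lqs \<gamma> e)" using 1(3) 2(3) by simp
  qed
  then show ?thesis unfolding L_positive_def using 1 2 by blast
qed

lemma PC_comp: "P \<in> PC n \<Longrightarrow> x \<in># P \<Longrightarrow> is_comp x"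
  by (auto simp: PC_def)

lemma FF_pair_eq: "{#a, b#} = {#c, d#} \<Longrightarrow> FF a b = FF c d"
  by (auto simp: pair_eq_iff fmul_comm)

theorem proposition5p4:
  fixes n :: nat
  assumes "0 < n"
  shows "partial_order_on (PC n) (pc_rel n)"
  unfolding partial_order_on_def preorder_on_def
proof (intro conjI)
  show "pc_rel n \<subseteq> PC n \<times> PC n" by (auto simp: pc_rel_def)
next
  show "refl_on (PC n) (pc_rel n)"
    unfolding refl_on_def
  proof
    fix P assume P: "P \<in> PC n"
    then obtain a b where "P = {#a, b#}" by (auto simp: PC_def)
    moreover have "L_positive (\<lambda>e. FF a b e - FF a b e)" using L_positive_zero by simp
    ultimately have "pc_le P P" unfolding pc_le_def by blast
    then show "(P, P) \<in> pc_rel n" using P by (simp add: pc_rel_def)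
  qed
next
  show "trans (pc_rel n)"
    unfolding trans_on_def
  proof (intro ballI impI)
    fix P Q R assume PQ: "(P, Q) \<in> pc_rel n" and QR: "(Q, R) \<in> pc_rel n"
    obtain a b c d where 1: "P = {#a, b#}" "Q = {#c, d#}" "L_positive (\<lambda>e. FF c d e - FF a b e)"
      using PQ by (auto simp: pc_rel_def pc_le_def)
    obtain c2 d2 g h where 2: "Q = {#c2, d2#}" "R = {#g, h#}" "L_positive (\<lambda>e. FF g h e - FF c2 d2 e)"
      using QR by (auto simp: pc_rel_def pc_le_def)
    have "{#c2, d2#} = {#c, d#}" using 1(2) 2(1) by simp
    then have e1: "FF c2 d2 = FF c d" by (rule FF_pair_eq)
    have "L_positive (\<lambda>e. (FF g h e - FF c2 d2 e) + (FF c d e - FF a b e))"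
      by (rule L_positive_add[OF 2(3) 1(3)])
    then have Lp: "L_positive (\<lambda>e. FF g h e - FF a b e)" using e1 by simp
    have "pc_le P R" unfolding pc_le_def using 1(1) 2(2) Lp by blast
    then show "(P, R) \<in> pc_rel n" using PQ QR by (simp add: pc_rel_def)
  qed
next
  show "antisym (pc_rel n)"
    unfolding antisym_on_def
  proof (intro ballI impI)
    fix P Q assume PQ: "(P, Q) \<in> pc_rel n" and QP: "(Q, P) \<in> pc_rel n"
    obtain a b c d where 1: "P = {#a, b#}" "Q = {#c, d#}" "L_positive (\<lambda>e. FF c d e - FF a b e)"
      using PQ by (auto simp: pc_rel_def pc_le_def)
    obtain c2 d2 a2 b2 where 2: "Q = {#c2, d2#}" "P = {#a2, b2#}" "L_positive (\<lambda>e. FF a2 b2 e - FF c2 d2 e)"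
      using QP by (auto simp: pc_rel_def pc_le_def)
    have "{#c2, d2#} = {#c, d#}" using 1(2) 2(1) by simp
    then have f1: "FF c2 d2 = FF c d" by (rule FF_pair_eq)
    have "{#a2, b2#} = {#a, b#}" using 1(1) 2(2) by simp
    then have f2: "FF a2 b2 = FF a b" by (rule FF_pair_eq)
    note f1 f2
    then have "FF a b = FF c d"
      using L_positive_nonneg[OF 1(3)] L_positive_nonneg[OF 2(3)] by (intro ext) (metis diff_ge_0_iff_ge order_antisym)
    moreover have PQn: "P \<in> PC n" "Q \<in> PC n" using PQ by (simp_all add: pc_rel_def)
    moreover have "a \<in># P" "b \<in># P" "c \<in># Q" "d \<in># Q" using 1(1,2) by simp_all
    ultimately have "is_comp a" "is_comp b" "is_comp c" "is_comp d"
      using PC_comp[OF PQn(1)] PC_comp[OF PQn(2)] by blast+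
    then have "{#a, b#} = {#c, d#}" using recover \<open>FF a b = FF c d\<close> by blast
    then show "P = Q" using 1 by simp
  qed
qed

end
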